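(* Let $K\ge 2$ and $M\ge 1$ be integers. For $m\in[M]$ let $\boldsymbol{A}_m\in\mathbb{R}^{K\times K}$ be a confusion matrix (entrywise nonnegative, each column summing to one), let $\boldsymbol{\lambda}\in\mathbb{R}^K$ be a probability vector, $\boldsymbol{D}=\mathrm{Diag}(\boldsymbol{\lambda})$, and set $$\boldsymbol{H}=[\boldsymbol{A}_1^{\top},\ldots,\boldsymbol{A}_M^{\top}]^{\top}\boldsymbol{D}^{1/2}\in\mathbb{R}^{MK\times K},\qquad \boldsymbol{X}=\boldsymbol{H}\boldsymbol{H}^{\top},$$ i.e. $\boldsymbol{X}$ is the $MK\times MK$ block matrix whose $(m,j)$-th $K\times K$ block is $\boldsymbol{R}_{m,j}=\boldsymbol{A}_m\boldsymbol{D}\boldsymbol{A}_j^{\top}$ for all $m,j\in[M]$. Assume that $\boldsymbol{H}$ satisfies the sufficiently scattered condition (SSC), that $\mathrm{rank}(\boldsymbol{H})=K$, and that $\boldsymbol{X}$ is available. Then all the confusion matrices and the prior are identified uniquely by symmetric nonnegative matrix factorization of $\boldsymbol{X}$ up to a common column permutation: for any $\boldsymbol{H}^\star\in\mathbb{R}^{MK\times K}$ with $\boldsymbol{H}^\star\ge\boldsymbol{0}$ and $\boldsymbol{X}=\boldsymbol{H}^\star(\boldsymbol{H}^\star)^{\top}$, there is a permutation matrix $\boldsymbol{\Pi}$ such that $\boldsymbol{A}_m^\star=\boldsymbol{A}_m\boldsymbol{\Pi}$ for all $m\in[M]$ and $\boldsymbol{\lambda}^\star=\boldsymbol{\Pi}^{\top}\boldsymbol{\lambda}$,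 where $\boldsymbol{A}^\star_m$ denotes the $m$-th $K\times K$ row block of $\boldsymbol{H}^\star$ with each column normalized to unit $\ell_1$ norm, and $\boldsymbol{\lambda}^\star$ is the prior estimate obtained from $\boldsymbol{H}^\star$, i.e. $\boldsymbol{H}^\star=[(\boldsymbol{A}_1^\star)^{\top},\ldots,(\boldsymbol{A}_M^\star)^{\top}]^{\top}\mathrm{Diag}(\boldsymbol{\lambda}^\star)^{1/2}$.
   Context: Sufficiently scattered condition (SSC): a nonnegative matrix $\boldsymbol{Z}\in\mathbb{R}^{I\times K}_+$ satisfies the SSC if (i) $\mathcal{C}\subseteq \mathrm{cone}(\boldsymbol{Z}^{\top})$, where $\mathcal{C}=\{\boldsymbol{x}\in\mathbb{R}^K:\ \boldsymbol{x}^{\top}\mathbf{1}\ge\sqrt{K-1}\,\|\boldsymbol{x}\|_2\}$ and $\mathrm{cone}(\boldsymbol{Z}^{\top})=\{\boldsymbol{Z}^{\top}\boldsymbol{\theta}:\boldsymbol{\theta}\ge \boldsymbol{0}\}$ is the conic hull of the rows of $\boldsymbol{Z}$; and (ii) $\mathrm{cone}(\boldsymbol{Z}^{\top})\not\subseteq\mathrm{cone}(\boldsymbol{Q})$ for any orthonormal $\boldsymbol{Q}\in\mathbb{R}^{K\times K}$ other than permutation matrices. In the Dawid–Skene model, $\boldsymbol{A}_m(k',k)=\Pr(X_m=k'\mid Y=k)$ is the probability that annotator $m$ outputs label $k'$ when the true label is $k$, and $\boldsymbol{\lambda}(k)=\Pr(Y=k)$. *)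

theory Defs
  imports "HOL-Analysis.Analysis"
begin

definition ssc_C :: "(real^'k) set" where
  "ssc_C = {x. (\<Sum>i\<in>UNIV. x $ i) \<ge> sqrt (real CARD('k) - 1) * norm x}"

definition col_cone :: "real^'n^'k \<Rightarrow> (real^'k) set" where
  "col_cone B = {B *v \<theta> | \<theta>. \<forall>i. \<theta> $ i \<ge> 0}"

definition perm_matrix :: "real^'k^'k \<Rightarrow> bool" where
  "perm_matrix P \<longleftrightarrow> (\<exists>p. p permutes (UNIV :: 'k set) \<and>
      P = (\<chi> i j. if i = p j then 1 else 0))"

definition SSC :: "real^'k^'i \<Rightarrow> bool" where
  "SSC Z \<longleftrightarrow> ssc_C \<subseteq> col_cone (transpose Z) \<and>
     (\<forall>Q :: real^'k^'k. orthogonal_matrix Q \<and> col_cone (transpose Z) \<subseteq> col_cone Q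
        \<longrightarrow> perm_matrix Q)"

definition confusion_matrix :: "real^'k^'k \<Rightarrow> bool" where
  "confusion_matrix A \<longleftrightarrow> (\<forall>i j. A $ i $ j \<ge> 0) \<and> (\<forall>j. (\<Sum>i\<in>UNIV. A $ i $ j) = 1)"

definition prob_vector :: "real^'k \<Rightarrow> bool" where
  "prob_vector l \<longleftrightarrow> (\<forall>i. l $ i \<ge> 0) \<and> (\<Sum>i\<in>UNIV. l $ i) = 1"

definition stackH :: "('m::finite \<Rightarrow> real^'k^'k) \<Rightarrow> real^'k \<Rightarrow> real^'k^('m \<times> 'k)" where
  "stackH A l = (\<chi> r j. A (fst r) $ (snd r) $ j * sqrt (l $ j))"

definition block_normalized :: "real^'k^('m::finite \<times> 'k) \<Rightarrow> 'm \<Rightarrow> real^'k^'k" where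
  "block_normalized Hs m = (\<chi> i j. Hs $ (m, i) $ j / (\<Sum>i'\<in>UNIV. \<bar>Hs $ (m, i') $ j\<bar>))"

end

theory Submission imports Defs begin
lemma mm_sub_l: "(A::real^'n^'m) ** (B - C) = A ** B - A ** C"
  by (simp add: matrix_matrix_mult_def vec_eq_iff algebra_simps sum_subtractf)
lemma mm_sub_r: "((A::real^'n^'m) - B) ** C = A ** C - B ** C"
  by (simp add: matrix_matrix_mult_def vec_eq_iff algebra_simps sum_subtractf)
lemma transpose_sub: "transpose ((A::real^'n^'m) - B) = transpose A - transpose B"
  by (simp add: transpose_def vec_eq_iff)

lemma MMt_zero:
  fixes M :: "real^'n^'m"
  assumes "M ** transpose M = 0" shows "M = 0"
proof -
  have "M $ i $ j = 0" for i j
  proof -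
    have "(M ** transpose M) $ i $ i = (\<Sum>k\<in>UNIV. (M $ i $ k)^2)"
      by (simp add: matrix_matrix_mult_def transpose_def power2_eq_square)
    hence s0: "(\<Sum>k\<in>UNIV. (M $ i $ k)^2) = 0" using assms by simp
    have "\<forall>k\<in>UNIV. (M $ i $ k)^2 = 0"
      using sum_nonneg_eq_0_iff[of UNIV "\<lambda>k. (M $ i $ k)^2"] s0 by simp
    thus "M $ i $ j = 0" by simp
  qed
  thus ?thesis by (simp add: vec_eq_iff)
qed

lemma gram_inj:
  fixes H :: "real^'n^'m"
  assumes "inj ((*v) H)"
  shows "inj ((*v) (transpose H ** H))"
proof -
  have k: "x = 0" if "(transpose H ** H) *v x = 0" for x
  proof -
    have "x \<bullet> ((transpose H ** H) *v x) = ((H *v x) v* H) \<bullet> x"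
      by (simp add: matrix_vector_mul_assoc[symmetric] inner_commute)
    also have "\<dots> = (H *v x) \<bullet> (H *v x)" by (rule dot_lmul_matrix)
    finally have "(H *v x) \<bullet> (H *v x) = 0" using that by simp
    hence "H *v x = H *v 0" by simp
    thus ?thesis by (rule injD[OF assms])
  qed
  show ?thesis
  proof (rule injI)
    fix x y assume "(transpose H ** H) *v x = (transpose H ** H) *v y"
    hence "(transpose H ** H) *v (x - y) = 0" by (simp add: matrix_vector_mult_diff_distrib)
    hence "x - y = 0" by (rule k)
    thus "x = y" by simp
  qed
qed

lemma factor:
  fixes H Hs :: "real^'k^'r"
  assumes inj: "inj ((*v) H)" and eq: "H ** transpose H = Hs ** transpose Hs"
  shows "\<exists>Q. orthogonal_matrix Q \<and> Hs = H ** Q"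
proof -
  define G where "G = transpose H ** H"
  obtain B where BG: "B ** G = mat 1"
    using gram_inj[OF inj] matrix_left_invertible_injective unfolding G_def by blast
  have GB: "G ** B = mat 1" using BG matrix_left_right_inverse by blast
  have tG: "transpose G = G" unfolding G_def by (simp add: matrix_transpose_mul)
  have "transpose B ** G = transpose (G ** B)"
    using tG by (simp add: matrix_transpose_mul)
  hence tBG: "transpose B ** G = mat 1" using GB by simp
  have "transpose B = transpose B ** (G ** B)" using GB by simp
  also have "\<dots> = (transpose B ** G) ** B" by (rule matrix_mul_assoc)
  also have "\<dots> = B" using tBG by simp
  finally have tB: "transpose B = B" .
  define Q where "Q = B ** (transpose H ** Hs)"
  have tQ: "transpose Q = transpose Hs ** H ** B"
    unfolding Q_def by (simp add: matrix_transpose_mul tB matrix_mul_assoc)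
  have "Q ** transpose Q = B ** transpose H ** (Hs ** transpose Hs) ** H ** B"
    unfolding tQ unfolding Q_def by (simp add: matrix_mul_assoc)
  also have "\<dots> = (B ** G) ** (G ** B)"
    unfolding eq[symmetric] G_def by (simp add: matrix_mul_assoc)
  also have "\<dots> = mat 1" using BG GB by simp
  finally have QQ: "Q ** transpose Q = mat 1" .
  hence oQ: "orthogonal_matrix Q"
    by (simp add: orthogonal_matrix matrix_left_right_inverse)
  define X where "X = H ** transpose H"
  have a1: "(H ** Q) ** transpose (H ** Q) = X"
  proof -
    have "(H ** Q) ** transpose (H ** Q) = H ** (Q ** transpose Q) ** transpose H"
      by (simp add: matrix_transpose_mul matrix_mul_assoc)
    thus ?thesis using QQ X_def by simp
  qed
  have a2: "(H ** Q) ** transpose Hs = X"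
  proof -
    have "(H ** Q) ** transpose Hs = H ** B ** transpose H ** (Hs ** transpose Hs)"
      unfolding Q_def by (simp add: matrix_mul_assoc)
    also have "\<dots> = H ** (B ** G) ** transpose H"
      unfolding eq[symmetric] G_def by (simp add: matrix_mul_assoc)
    finally show ?thesis using BG X_def by simp
  qed
  have a3: "Hs ** transpose (H ** Q) = X"
    using arg_cong[OF a2, of transpose] unfolding X_def
    by (simp add: matrix_transpose_mul)
  have a4: "Hs ** transpose Hs = X" using eq X_def by simp
  have "(H ** Q - Hs) ** transpose (H ** Q - Hs) = 0"
    by (simp add: transpose_sub mm_sub_l mm_sub_r a1 a2 a3 a4)
  hence "H ** Q - Hs = 0" by (rule MMt_zero)
  thus ?thesis using oQ by auto
qed


theorem proposition1:
  fixes A :: "'m::finite \<Rightarrow> real^'k::finite^'k"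
    and lam :: "real^'k"
  assumes K2: "CARD('k) \<ge> 2"
    and conf: "\<forall>m. confusion_matrix (A m)"
    and prob: "prob_vector lam"
    and ssc: "SSC (stackH A lam)"
    and rk: "rank (stackH A lam) = CARD('k)"
  shows "\<forall>Hs :: real^'k^('m \<times> 'k).
           (\<forall>r j. Hs $ r $ j \<ge> 0) \<and>
           stackH A lam ** transpose (stackH A lam) = Hs ** transpose Hs
           \<longrightarrow> (\<exists>P. perm_matrix P \<and>
                  (\<forall>m. block_normalized Hs m = A m ** P) \<and>
                  (\<exists>ls. (\<forall>j. ls $ j \<ge> 0) \<and> Hs = stackH (block_normalized Hs) ls) \<and>
                  (\<forall>ls. (\<forall>j. ls $ j \<ge> 0) \<and> Hs = stackH (block_normalized Hs) ls
                        \<longrightarrow> ls = transpose P *v lam))"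
proof (intro allI impI)
  fix Hs :: "real^'k^('m \<times> 'k)"
  assume asm: "(\<forall>r j. Hs $ r $ j \<ge> 0) \<and>
           stackH A lam ** transpose (stackH A lam) = Hs ** transpose Hs"
  define H where "H = stackH A lam"
  have Hent: "H $ r $ j = A (fst r) $ (snd r) $ j * sqrt (lam $ j)" for r j
    unfolding H_def stackH_def by simp
  have inj: "inj ((*v) H)" using rk full_rank_injective unfolding H_def by blast
  have Hsnn: "\<And>r j. Hs $ r $ j \<ge> 0" using asm by blast
  obtain Q where oQ: "orthogonal_matrix Q" and HsQ: "Hs = H ** Q"
    using factor[OF inj] asm unfolding H_def by blast
  have cone: "col_cone (transpose H) \<subseteq> col_cone Q"
  proof
    fix x assume "x \<in> col_cone (transpose H)"
    then obtain \<theta> where x: "x = transpose H *v \<theta>" and th: "\<forall>i. \<theta> $ i \<ge> 0"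
      unfolding col_cone_def by blast
    define \<phi> where "\<phi> = transpose Q *v x"
    have "Q *v \<phi> = (Q ** transpose Q) *v x"
      unfolding \<phi>_def by (rule matrix_vector_mul_assoc)
    also have "\<dots> = x" using oQ by (simp add: orthogonal_matrix_def)
    finally have eqx: "x = Q *v \<phi>" by simp
    have "\<phi> = transpose Hs *v \<theta>"
      unfolding \<phi>_def x HsQ by (simp only: matrix_vector_mul_assoc matrix_transpose_mul)
    hence "\<phi> $ i = (\<Sum>r\<in>UNIV. Hs $ r $ i * \<theta> $ r)" for i
      unfolding matrix_vector_mult_def transpose_def by simp
    hence "\<forall>i. \<phi> $ i \<ge> 0"
      using th Hsnn by (auto intro!: sum_nonneg)
    thus "x \<in> col_cone Q" unfolding col_cone_def using eqx by blast
  qed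
  have "perm_matrix Q" using ssc oQ cone unfolding SSC_def H_def by blast
  then obtain p where pp: "p permutes (UNIV :: 'k set)"
      and Qdef: "Q = (\<chi> i j. if i = p j then 1 else 0)"
    unfolding perm_matrix_def by blast
  have Hsent: "Hs $ r $ j = H $ r $ p j" for r j
    unfolding HsQ Qdef matrix_matrix_mult_def
    by (simp add: if_distrib cong: if_cong)
  have lam0: "lam $ j \<ge> 0" for j using prob unfolding prob_vector_def by blast
  have lampos: "lam $ j > 0" for j
  proof (rule ccontr)
    assume "\<not> lam $ j > 0"
    hence l0: "lam $ j = 0" using lam0[of j] by simp
    have "H *v axis j 1 = 0"
      by (simp add: vec_eq_iff matrix_vector_mult_def axis_def Hent l0 if_distrib cong: if_cong)
    hence "H *v axis j 1 = H *v 0" by simp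
    hence ax: "axis j (1::real) = 0" by (rule injD[OF inj])
    have "axis j (1::real) $ j = (0::real^'k) $ j" by (simp only: ax)
    thus False by simp
  qed
  have Ann: "A m $ i $ j \<ge> 0" for m i j using conf unfolding confusion_matrix_def by blast
  have Asum: "(\<Sum>i\<in>UNIV. A m $ i $ j) = 1" for m j
    using conf unfolding confusion_matrix_def by blast
  have den: "(\<Sum>i'\<in>UNIV. \<bar>A m $ i' $ j * sqrt (lam $ j)\<bar>) = sqrt (lam $ j)" for m j
  proof -
    have "(\<Sum>i'\<in>UNIV. \<bar>A m $ i' $ j * sqrt (lam $ j)\<bar>) = (\<Sum>i'\<in>UNIV. A m $ i' $ j) * sqrt (lam $ j)"
      by (simp add: abs_mult Ann lam0 sum_distrib_right)
    thus ?thesis using Asum by simp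
  qed
  have bn: "block_normalized Hs m $ i $ j = A m $ i $ p j" for m i j
  proof -
    have "sqrt (lam $ p j) > 0" using lampos by simp
    thus ?thesis
      unfolding block_normalized_def using den[of m "p j"]
      by (simp add: Hsent Hent)
  qed
  have AQ: "(A m ** Q) $ i $ j = A m $ i $ p j" for m i j
    unfolding Qdef matrix_matrix_mult_def
    by (simp add: if_distrib cong: if_cong)
  show "\<exists>P. perm_matrix P \<and>
                  (\<forall>m. block_normalized Hs m = A m ** P) \<and>
                  (\<exists>ls. (\<forall>j. ls $ j \<ge> 0) \<and> Hs = stackH (block_normalized Hs) ls) \<and>
                  (\<forall>ls. (\<forall>j. ls $ j \<ge> 0) \<and> Hs = stackH (block_normalized Hs) ls
                        \<longrightarrow> ls = transpose P *v lam)"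
  proof (rule exI[of _ Q], intro conjI allI impI)
    show "perm_matrix Q" by fact
    show "block_normalized Hs m = A m ** Q" for m
      by (simp add: vec_eq_iff bn AQ)
    show "\<exists>ls. (\<forall>j. ls $ j \<ge> 0) \<and> Hs = stackH (block_normalized Hs) ls"
    proof (rule exI[of _ "\<chi> j. lam $ p j"], intro conjI allI)
      show "0 \<le> (\<chi> j. lam $ p j) $ j" for j using lam0 by simp
      have "Hs $ r $ j = stackH (block_normalized Hs) (\<chi> j. lam $ p j) $ r $ j" for r j
        by (simp add: stackH_def bn Hsent Hent)
      thus "Hs = stackH (block_normalized Hs) (\<chi> j. lam $ p j)"
        by (simp add: vec_eq_iff)
    qed
    fix ls :: "real^'k"
    assume ls: "(\<forall>j. ls $ j \<ge> 0) \<and> Hs = stackH (block_normalized Hs) ls"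
    show "ls = transpose Q *v lam"
    proof (subst vec_eq_iff, intro allI)
      fix j
      have "\<exists>i. A undefined $ i $ p j \<noteq> 0"
      proof (rule ccontr)
        assume "\<not> (\<exists>i. A undefined $ i $ p j \<noteq> 0)"
        hence "(\<Sum>i\<in>UNIV. A undefined $ i $ p j) = 0" by simp
        thus False using Asum[of undefined "p j"] by simp
      qed
      then obtain i where Ai: "A undefined $ i $ p j \<noteq> 0" by blast
      have gen: "\<And>X Y :: real^'k^('m \<times> 'k). X = Y \<Longrightarrow> X $ r $ c = Y $ r $ c" for r c by simp
      have eqH: "Hs = stackH (block_normalized Hs) ls" using ls by blast
      have "Hs $ (undefined, i) $ j = stackH (block_normalized Hs) ls $ (undefined, i) $ j"
        by (rule gen[OF eqH])
      hence "A undefined $ i $ p j * sqrt (lam $ p j) = A undefined $ i $ p j * sqrt (ls $ j)"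
        by (simp add: stackH_def bn Hsent Hent)
      hence "sqrt (lam $ p j) = sqrt (ls $ j)" using Ai by simp
      hence "ls $ j = lam $ p j" by simp
      moreover have "(transpose Q *v lam) $ j = lam $ p j"
      proof -
        have e1: "(transpose Q *v lam) $ j = (\<Sum>i\<in>UNIV. (if i = p j then 1 else 0) * lam $ i)"
          unfolding Qdef matrix_vector_mult_def transpose_def by simp
        have e2: "(\<Sum>i\<in>UNIV. (if i = p j then 1 else 0) * lam $ i)
            = (\<Sum>i\<in>UNIV. (if i = p j then lam $ i else 0))"
          by (rule sum.cong) auto
        show ?thesis unfolding e1 e2 by simp
      qed
      ultimately show "ls $ j = (transpose Q *v lam) $ j" by simp
    qed
  qed
qed

end
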